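(* Let $n\geqslant 2$ and $\alpha,\beta\in\mathbf{I}\mathbb{N}_{\infty}^n$. Then: (i) $\alpha\mathscr{L}\beta$ iff there exists $\sigma\in H(\mathbb{I})$ with $\alpha=\sigma\beta$; (ii) $\alpha\mathscr{R}\beta$ iff there exists $\sigma\in H(\mathbb{I})$ with $\alpha=\beta\sigma$; (iii) $\alpha\mathscr{H}\beta$ iff there exist $\sigma_1,\sigma_2\in H(\mathbb{I})$ with $\alpha=\sigma_1\beta$ and $\alpha=\beta\sigma_2$; (iv) $\alpha\mathscr{D}\beta$ iff there exist $\sigma_1,\sigma_2\in H(\mathbb{I})$ with $\alpha=\sigma_1\beta\sigma_2$; (v) $\mathscr{D}=\mathscr{J}$ on $\mathbf{I}\mathbb{N}_{\infty}^n$; (vi) every $\mathscr{J}$-class of $\mathbf{I}\mathbb{N}_{\infty}^n$ is finite and consists of pairwise incomparable elements with respect to the natural partial order $\preccurlyeq$.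
   Context: $\mathbb{N}=\{1,2,3,\ldots\}$, $n\geqslant 2$, and $\mathbb{N}^n$ carries the Euclidean metric $d$. A partial isometry of $\mathbb{N}^n$ is an injective partial map $\alpha\colon\mathbb{N}^n\rightharpoonup\mathbb{N}^n$ with $d((\mathbf{x})\alpha,(\mathbf{y})\alpha)=d(\mathbf{x},\mathbf{y})$ for all $\mathbf{x},\mathbf{y}\in\operatorname{dom}\alpha$; it is cofinite if $\mathbb{N}^n\setminus\operatorname{dom}\alpha$ and $\mathbb{N}^n\setminus\operatorname{ran}\alpha$ are finite. $\mathbf{I}\mathbb{N}_{\infty}^n$ is the monoid of all partial cofinite isometries of $\mathbb{N}^n$ under composition of partial maps written on the right. Its identity is the identity map $\mathbb{I}$ of $\mathbb{N}^n$ and $H(\mathbb{I})$ is its group of units. Green's relations on a semigroup $S$: $a\mathscr{R}b$ iff $aS^1=bS^1$; $a\mathscr{L}b$ iff $S^1a=S^1b$; $a\mathscr{J}b$ iff $S^1aS^1=S^1bS^1$; $\mathscr{D}=\mathscr{L}\circ\mathscr{R}$; $\mathscr{H}=\mathscr{L}\cap\mathscr{R}$. The natural partial order on the inverse semigroup $\mathbf{I}\mathbb{N}_{\infty}^n$ is $s\preccurlyeq t$ iff $s=te$ for some idempotent $e$. *)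

theory Defs
  imports "HOL-Analysis.Analysis"
begin

text \<open>Points of N^n (N = {1,2,...}) with index type 'n, n = CARD('n).\<close>
definition Npts :: "(nat ^ 'n) set" where
  "Npts = {x. \<forall>i. 1 \<le> x $ i}"

definition edist :: "nat ^ 'n \<Rightarrow> nat ^ 'n \<Rightarrow> real" where
  "edist x y = sqrt (\<Sum>i\<in>UNIV. (real (x $ i) - real (y $ i))\<^sup>2)"

definition partial_isometry :: "(nat ^ 'n \<rightharpoonup> nat ^ 'n) \<Rightarrow> bool" where
  "partial_isometry a \<longleftrightarrow> dom a \<subseteq> Npts \<and> ran a \<subseteq> Npts \<and> inj_on a (dom a) \<and>
     (\<forall>x\<in>dom a. \<forall>y\<in>dom a. edist (the (a x)) (the (a y)) = edist x y)"

definition cofinite_pi :: "(nat ^ 'n \<rightharpoonup> nat ^ 'n) \<Rightarrow> bool" where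
  "cofinite_pi a \<longleftrightarrow> partial_isometry a \<and> finite (Npts - dom a) \<and> finite (Npts - ran a)"

definition INinf :: "(nat ^ 'n \<rightharpoonup> nat ^ 'n) set" where
  "INinf = {a. cofinite_pi a}"

text \<open>Composition of partial maps written on the right: x(ab) = (xa)b.\<close>
definition rcomp :: "('a \<rightharpoonup> 'a) \<Rightarrow> ('a \<rightharpoonup> 'a) \<Rightarrow> ('a \<rightharpoonup> 'a)" (infixl "\<cdot>" 70) where
  "a \<cdot> b = b \<circ>\<^sub>m a"

definition Iden :: "nat ^ 'n \<rightharpoonup> nat ^ 'n" where
  "Iden = (\<lambda>x. if x \<in> Npts then Some x else None)"

definition units_IN :: "(nat ^ 'n \<rightharpoonup> nat ^ 'n) set" where
  "units_IN = {s \<in> INinf. \<exists>t\<in>INinf. s \<cdot> t = Iden \<and> t \<cdot> s = Iden}"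

text \<open>Green's relations for a semigroup (carrier S, multiplication m); S^1 a = {a} \<union> S a etc.\<close>
definition left_ideal1 :: "'a set \<Rightarrow> ('a \<Rightarrow> 'a \<Rightarrow> 'a) \<Rightarrow> 'a \<Rightarrow> 'a set" where
  "left_ideal1 S m a = insert a ((\<lambda>s. m s a) ` S)"
definition right_ideal1 :: "'a set \<Rightarrow> ('a \<Rightarrow> 'a \<Rightarrow> 'a) \<Rightarrow> 'a \<Rightarrow> 'a set" where
  "right_ideal1 S m a = insert a ((\<lambda>s. m a s) ` S)"
definition two_ideal1 :: "'a set \<Rightarrow> ('a \<Rightarrow> 'a \<Rightarrow> 'a) \<Rightarrow> 'a \<Rightarrow> 'a set" where
  "two_ideal1 S m a = (\<Union>u\<in>insert a ((\<lambda>s. m s a) ` S). insert u ((\<lambda>t. m u t) ` S))"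

definition greenL :: "'a set \<Rightarrow> ('a \<Rightarrow> 'a \<Rightarrow> 'a) \<Rightarrow> 'a \<Rightarrow> 'a \<Rightarrow> bool" where
  "greenL S m a b \<longleftrightarrow> left_ideal1 S m a = left_ideal1 S m b"
definition greenR :: "'a set \<Rightarrow> ('a \<Rightarrow> 'a \<Rightarrow> 'a) \<Rightarrow> 'a \<Rightarrow> 'a \<Rightarrow> bool" where
  "greenR S m a b \<longleftrightarrow> right_ideal1 S m a = right_ideal1 S m b"
definition greenJ :: "'a set \<Rightarrow> ('a \<Rightarrow> 'a \<Rightarrow> 'a) \<Rightarrow> 'a \<Rightarrow> 'a \<Rightarrow> bool" where
  "greenJ S m a b \<longleftrightarrow> two_ideal1 S m a = two_ideal1 S m b"
definition greenH :: "'a set \<Rightarrow> ('a \<Rightarrow> 'a \<Rightarrow> 'a) \<Rightarrow> 'a \<Rightarrow> 'a \<Rightarrow> bool" where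
  "greenH S m a b \<longleftrightarrow> greenL S m a b \<and> greenR S m a b"
definition greenD :: "'a set \<Rightarrow> ('a \<Rightarrow> 'a \<Rightarrow> 'a) \<Rightarrow> 'a \<Rightarrow> 'a \<Rightarrow> bool" where
  "greenD S m a b \<longleftrightarrow> (\<exists>c\<in>S. greenL S m a c \<and> greenR S m c b)"

definition natord :: "'a set \<Rightarrow> ('a \<Rightarrow> 'a \<Rightarrow> 'a) \<Rightarrow> 'a \<Rightarrow> 'a \<Rightarrow> bool" where
  "natord S m s t \<longleftrightarrow> (\<exists>e\<in>S. m e e = e \<and> s = m t e)"

end

theory Submission
  imports Defs
begin

definition P :: "('n \<Rightarrow> 'n) \<Rightarrow> nat^'n \<Rightarrow> nat^'n" where "P q x = (\<chi> j. x $ q j)"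
definition restr :: "(nat^'n) set \<Rightarrow> ('n \<Rightarrow> 'n) \<Rightarrow> (nat^'n \<rightharpoonup> nat^'n)" where
  "restr A q = (\<lambda>x. if x \<in> A then Some (P q x) else None)"
definition D :: "nat^'n \<Rightarrow> nat^'n \<Rightarrow> int" where
  "D x y = (\<Sum>i\<in>UNIV. (int (x$i) - int (y$i))^2)"

lemma edist_D: "edist x y = sqrt (real_of_int (D x y))"
  unfolding edist_def D_def by simp

lemma edist_eq_iff: "edist x y = edist u v \<longleftrightarrow> D x y = D u v"
  unfolding edist_D by simp

lemma D_one_coord:
  assumes "\<And>i. i \<noteq> j \<Longrightarrow> x$i = y$i"
  shows "D x y = (int (x$j) - int (y$j))^2"
proof -
  have "D x y = (\<Sum>i\<in>UNIV. if i = j then (int (x$j) - int (y$j))^2 else 0)"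
    unfolding D_def by (rule sum.cong) (auto simp: assms)
  then show ?thesis by simp
qed

lemma D_two_coord:
  assumes "k \<noteq> l" "\<And>i. i \<noteq> k \<Longrightarrow> i \<noteq> l \<Longrightarrow> x$i = y$i"
  shows "D x y = (int (x$k) - int (y$k))^2 + (int (x$l) - int (y$l))^2"
proof -
  have "D x y = (\<Sum>i\<in>UNIV. (if i = k then (int (x$k) - int (y$k))^2 else 0)
       + (if i = l then (int (x$l) - int (y$l))^2 else 0))"
    unfolding D_def by (rule sum.cong) (use assms in auto)
  also have "\<dots> = (int (x$k) - int (y$k))^2 + (int (x$l) - int (y$l))^2"
    by (simp add: sum.distrib)
  finally show ?thesis .
qed

lemma D_diff:
  assumes "\<And>i. i \<noteq> j \<Longrightarrow> z'$i = z$i"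
  shows "D y z' - D y z = (int (y$j) - int (z'$j))^2 - (int (y$j) - int (z$j))^2"
proof -
  have "D y z' - D y z = (\<Sum>i\<in>UNIV. (int (y$i) - int (z'$i))^2 - (int (y$i) - int (z$i))^2)"
    unfolding D_def by (simp add: sum_subtractf)
  also have "\<dots> = (\<Sum>i\<in>UNIV. if i = j then (int (y$j) - int (z'$j))^2 - (int (y$j) - int (z$j))^2 else 0)"
    by (rule sum.cong) (auto simp: assms)
  finally show ?thesis by simp
qed

lemma D_one:
  assumes "D x y = 1"
  shows "\<exists>j. (\<forall>i. i \<noteq> j \<longrightarrow> x$i = y$i) \<and> (int (x$j) - int (y$j) = 1 \<or> int (x$j) - int (y$j) = -1)"
proof -
  have "\<exists>j. x$j \<noteq> y$j"
  proof (rule ccontr)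
    assume "\<not> ?thesis"
    then have "D x y = 0" unfolding D_def by simp
    with assms show False by simp
  qed
  then obtain j where j: "x$j \<noteq> y$j" by blast
  let ?t = "\<lambda>i. (int (x$i) - int (y$i))^2"
  have split: "D x y = ?t j + (\<Sum>i\<in>UNIV - {j}. ?t i)"
    unfolding D_def by (simp add: sum.remove)
  have tj: "?t j \<ge> 1" using j
    by (metis diff_ge_0_iff_ge int_one_le_iff_zero_less less_le linorder_le_less_linear
         not_numeral_le_zero of_nat_eq_iff power2_less_0 zero_less_power2 eq_iff_diff_eq_0)
  have rest: "(\<Sum>i\<in>UNIV - {j}. ?t i) \<ge> 0" by (simp add: sum_nonneg)
  have "?t j = 1" using split tj rest assms by linarith
  moreover have "(\<Sum>i\<in>UNIV - {j}. ?t i) = 0" using split tj rest assms by linarith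
  then have "\<forall>i\<in>UNIV - {j}. ?t i = 0"
    by (subst (asm) sum_nonneg_eq_0_iff) auto
  ultimately show ?thesis
    by (intro exI[of _ j]) (auto simp: power2_eq_1_iff)
qed

lemma P_nth[simp]: "P q x $ j = x $ q j" unfolding P_def by simp

lemma P_comp: "P r (P q x) = P (q \<circ> r) x" by (simp add: vec_eq_iff)
lemma P_id: "P id x = x" by (simp add: vec_eq_iff)

lemma P_Npts: "x \<in> Npts \<Longrightarrow> P q x \<in> Npts" by (simp add: Npts_def)

lemma P_inv1: assumes "bij q" shows "P (inv q) (P q x) = x"
proof -
  have "\<And>j. q (inv q j) = j" using assms by (meson bij_inv_eq_iff)
  then show ?thesis by (simp add: vec_eq_iff)
qed
lemma P_inv2: assumes "bij q" shows "P q (P (inv q) x) = x"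
proof -
  have "\<And>j. inv q (q j) = j" using assms by (simp add: bij_is_inj)
  then show ?thesis by (simp add: vec_eq_iff)
qed

lemma P_inj: "bij q \<Longrightarrow> inj (P q)"
  by (metis P_inv1 injI)

lemma D_P: assumes "bij q" shows "D (P q x) (P q y) = D x y"
proof -
  have "D (P q x) (P q y) = (\<Sum>j\<in>UNIV. (\<lambda>i. (int (x$i) - int (y$i))^2) (q j))"
    unfolding D_def by simp
  also have "\<dots> = (\<Sum>i\<in>UNIV. (int (x$i) - int (y$i))^2)"
    using sum.reindex_bij_betw[of q UNIV UNIV "\<lambda>i. (int (x$i) - int (y$i))^2"] assms
    by (simp add: bij_betw_def)
  finally show ?thesis unfolding D_def .
qed

lemma dom_restr[simp]: "dom (restr A q) = A" unfolding restr_def dom_def by auto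
lemma ran_restr: "ran (restr A q) = P q ` A" unfolding restr_def ran_def by (auto split: if_splits)

lemma Npts_minus_image:
  assumes "bij q" shows "Npts - P q ` A \<subseteq> P q ` (Npts - A)"
proof
  fix y assume y: "y \<in> Npts - P q ` A"
  have "P (inv q) y \<in> Npts" using y P_Npts by blast
  moreover have "P (inv q) y \<notin> A"
  proof
    assume "P (inv q) y \<in> A"
    then have "P q (P (inv q) y) \<in> P q ` A" by blast
    with y show False by (simp add: P_inv2[OF assms])
  qed
  ultimately have "P (inv q) y \<in> Npts - A" by blast
  moreover have "y = P q (P (inv q) y)" using P_inv2[OF assms] by simp
  ultimately show "y \<in> P q ` (Npts - A)" by blast
qed

lemma restr_INinf:
  assumes "A \<subseteq> Npts" "finite (Npts - A)" "bij q"
  shows "restr A q \<in> INinf"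
  unfolding INinf_def cofinite_pi_def partial_isometry_def
proof (intro CollectI conjI)
  show "dom (restr A q) \<subseteq> Npts" using assms by simp
  show "ran (restr A q) \<subseteq> Npts" using assms P_Npts by (auto simp: ran_restr)
  show "inj_on (restr A q) (dom (restr A q))"
    unfolding dom_restr by (rule inj_onI) (simp add: restr_def inj_eq[OF P_inj[OF assms(3)]])
  show "\<forall>x\<in>dom (restr A q). \<forall>y\<in>dom (restr A q). edist (the (restr A q x)) (the (restr A q y)) = edist x y"
    unfolding dom_restr using D_P[OF assms(3)] by (simp add: restr_def edist_eq_iff)
  show "finite (Npts - dom (restr A q))" using assms by simp
  show "finite (Npts - ran (restr A q))" unfolding ran_restr
    by (rule finite_subset[OF Npts_minus_image[OF assms(3)]]) (use assms(2) in blast)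
qed

lemma restr_comp: "restr A q \<cdot> restr B r = restr {x\<in>A. P q x \<in> B} (q \<circ> r)"
  unfolding rcomp_def restr_def map_comp_def by (simp add: P_comp fun_eq_iff)

lemma Iden_restr: "Iden = restr Npts id"
  unfolding Iden_def restr_def by (auto simp: fun_eq_iff vec_eq_iff)

lemma exists_other:
  assumes "CARD('n) \<ge> 2" shows "\<exists>l::'n. l \<noteq> k"
proof (rule ccontr)
  assume "\<not> ?thesis"
  then have "(UNIV::'n set) = {k}" by auto
  then have "CARD('n) = card {k}" by (rule arg_cong)
  with assms show False by simp
qed

lemma bound_exists:
  assumes "finite (F :: (nat^'n) set)"
  shows "\<exists>M\<ge>1. \<forall>x\<in>F. \<forall>i. x$i < M"
proof -
  have "finite ((\<lambda>(x,i). x$i) ` (F \<times> (UNIV::'n set)))" using assms by simp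
  then obtain B where B: "\<forall>v\<in>(\<lambda>(x,i). x$i) ` (F \<times> (UNIV::'n set)). v \<le> B"
    using finite_nat_set_iff_bounded_le by blast
  have "\<forall>x\<in>F. \<forall>i. x$i < B + 1"
  proof (intro ballI allI)
    fix x i assume "x \<in> F"
    then have "x$i \<le> B" using B by force
    then show "x$i < B + 1" by simp
  qed
  then show ?thesis by (intro exI[of _ "B+1"]) auto
qed

lemma char:
  assumes n2: "CARD('n) \<ge> 2" and a: "(\<alpha> :: nat^'n \<rightharpoonup> nat^'n) \<in> INinf"
  shows "\<exists>q. bij q \<and> \<alpha> = restr (dom \<alpha>) q"
proof -
  have pi: "dom \<alpha> \<subseteq> Npts" "ran \<alpha> \<subseteq> Npts" "inj_on \<alpha> (dom \<alpha>)"
     "\<And>x y. x\<in>dom \<alpha> \<Longrightarrow> y\<in>dom \<alpha> \<Longrightarrow> edist (the (\<alpha> x)) (the (\<alpha> y)) = edist x y"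
     and fin: "finite (Npts - dom \<alpha>)" "finite (Npts - ran \<alpha>)"
    using a unfolding INinf_def cofinite_pi_def partial_isometry_def by auto
  define f where "f x = the (\<alpha> x)" for x
  have iso: "D (f x) (f y) = D x y" if "x\<in>dom \<alpha>" "y\<in>dom \<alpha>" for x y
    using pi(4)[OF that] unfolding f_def edist_eq_iff .
  have fS: "\<alpha> x = Some (f x)" if "x \<in> dom \<alpha>" for x using that unfolding f_def by auto
  have fN: "f x \<in> Npts" if "x \<in> dom \<alpha>" for x
    using fS[OF that] pi(2) by (auto simp: ran_def)
  have fran: "\<exists>x\<in>dom \<alpha>. f x = y" if yr: "y \<in> ran \<alpha>" for y
  proof -
    obtain x where "\<alpha> x = Some y" using yr by (auto simp: ran_def)
    then show ?thesis by (intro bexI[of _ x]) (auto simp: f_def)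
  qed
  have xN: "x \<in> Npts" if "x \<in> dom \<alpha>" for x using pi(1) that by blast
  obtain M where M1: "M \<ge> 1" and Mb: "\<forall>x\<in>(Npts - dom \<alpha>) \<union> (Npts - ran \<alpha>). \<forall>i. x$i < M"
    using bound_exists[of "(Npts - dom \<alpha>) \<union> (Npts - ran \<alpha>)"] fin by auto
  have big: "x \<in> dom \<alpha> \<and> x \<in> ran \<alpha>" if "x \<in> Npts" "x$i \<ge> M" for x i
    using Mb that by (meson DiffI UnCI not_le)
  define a :: "nat^'n" where "a = (\<chi> i. M)"
  define ak :: "'n \<Rightarrow> nat^'n" where "ak k = (\<chi> i. if i = k then M+1 else M)" for k
  have aN: "a \<in> Npts" using M1 by (simp add: a_def Npts_def)
  have akN: "ak k \<in> Npts" for k using M1 by (simp add: ak_def Npts_def)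
  have adom: "a \<in> dom \<alpha>" using big[OF aN, of undefined] by (simp add: a_def)
  have akdom: "ak k \<in> dom \<alpha>" for k using big[OF akN, of k k] by (simp add: ak_def)
  have "\<forall>k. \<exists>j. (\<forall>i. i \<noteq> j \<longrightarrow> f (ak k)$i = f a$i) \<and>
            (int (f (ak k)$j) - int (f a$j) = 1 \<or> int (f (ak k)$j) - int (f a$j) = -1)"
  proof
    fix k
    have "D (ak k) a = 1" by (subst D_one_coord[of k]) (auto simp: ak_def a_def)
    then have "D (f (ak k)) (f a) = 1" using iso[OF akdom adom] by simp
    then show "\<exists>j. (\<forall>i. i \<noteq> j \<longrightarrow> f (ak k)$i = f a$i) \<and>
            (int (f (ak k)$j) - int (f a$j) = 1 \<or> int (f (ak k)$j) - int (f a$j) = -1)"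
      by (rule D_one)
  qed
  then obtain \<pi> where \<pi>: "\<And>k. (\<forall>i. i \<noteq> \<pi> k \<longrightarrow> f (ak k)$i = f a$i)"
     "\<And>k. int (f (ak k)$\<pi> k) - int (f a$\<pi> k) = 1 \<or> int (f (ak k)$\<pi> k) - int (f a$\<pi> k) = -1"
    by metis
  define s where "s k = int (f (ak k)$\<pi> k) - int (f a$\<pi> k)" for k
  have s1: "s k = 1 \<or> s k = -1" for k using \<pi>(2) s_def by simp
  have inj: "inj \<pi>"
  proof (rule injI)
    fix k l assume eq: "\<pi> k = \<pi> l"
    show "k = l"
    proof (rule ccontr)
      assume kl: "k \<noteq> l"
      have "D (ak k) (ak l) = 2" by (subst D_two_coord[OF kl]) (use kl in \<open>auto simp: ak_def\<close>)
      then have "D (f (ak k)) (f (ak l)) = 2" using iso[OF akdom akdom] by simp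
      moreover have "D (f (ak k)) (f (ak l)) = (s k - s l)^2"
        by (subst D_one_coord[of "\<pi> k"]) (use \<pi>(1) eq in \<open>auto simp: s_def\<close>)
      ultimately show False using s1[of k] s1[of l] by auto
    qed
  qed
  then have bij: "bij \<pi>" using finite_UNIV_inj_surj[of \<pi>] by (simp add: bij_def)
  have key: "int (f x $ \<pi> k) = int (f a $ \<pi> k) + s k * (int (x$k) - int M)"
    if x: "x \<in> dom \<alpha>" for x k
  proof -
    have e: "D (f x) (f (ak k)) - D (f x) (f a) = D x (ak k) - D x a"
      using iso[OF x akdom] iso[OF x adom] by simp
    have l: "D (f x) (f (ak k)) - D (f x) (f a) =
      (int (f x$\<pi> k) - int (f (ak k)$\<pi> k))^2 - (int (f x$\<pi> k) - int (f a$\<pi> k))^2"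
      by (rule D_diff) (use \<pi>(1) in auto)
    have r: "D x (ak k) - D x a = (int (x$k) - int (ak k$k))^2 - (int (x$k) - int (a$k))^2"
      by (rule D_diff) (auto simp: ak_def a_def)
    have sk: "int (f (ak k)$\<pi> k) = int (f a$\<pi> k) + s k" by (simp add: s_def)
    have "(int (f x$\<pi> k) - (int (f a$\<pi> k) + s k))^2 - (int (f x$\<pi> k) - int (f a$\<pi> k))^2
        = (int (x$k) - (int M + 1))^2 - (int (x$k) - int M)^2"
      using e l r sk by (simp add: ak_def a_def add.commute)
    then show ?thesis using s1[of k]
      by (auto simp: power2_eq_square algebra_simps)
  qed
  have spos: "s k = 1" for k
  proof (rule ccontr)
    assume "s k \<noteq> 1"
    then have sm: "s k = -1" using s1 by auto
    define x :: "nat^'n" where "x = (\<chi> i. if i = k then M + f a $ \<pi> k else M)"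
    have xN': "x \<in> Npts" using M1 by (simp add: x_def Npts_def)
    have "x \<in> dom \<alpha>" using big[OF xN', of k] by (simp add: x_def)
    then have "int (f x $ \<pi> k) = 0" "f x \<in> Npts" using key[of x k] sm fN by (auto simp: x_def)
    moreover have "\<And>y::nat^'n. y \<in> Npts \<Longrightarrow> y $ \<pi> k \<ge> 1" by (simp add: Npts_def)
    ultimately show False by (metis not_one_le_zero of_nat_eq_0_iff)
  qed
  have b0: "f a $ \<pi> k = M" for k
  proof -
    obtain l where l: "l \<noteq> k" using exists_other[OF n2] by blast
    define x :: "nat^'n" where "x = (\<chi> i. if i = k then 1 else M)"
    have xN': "x \<in> Npts" using M1 by (simp add: x_def Npts_def)
    have "x \<in> dom \<alpha>" using big[OF xN', of l] l by (simp add: x_def)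
    then have "int (f x $ \<pi> k) = int (f a $ \<pi> k) + 1 - int M" "f x \<in> Npts"
      using key[of x k] spos fN by (auto simp: x_def)
    moreover have "\<And>y::nat^'n. y \<in> Npts \<Longrightarrow> y $ \<pi> k \<ge> 1" by (simp add: Npts_def)
    ultimately have "int (f x $ \<pi> k) = int (f a $ \<pi> k) + 1 - int M" "f x $ \<pi> k \<ge> 1"
      by blast+
    then have ge: "f a $ \<pi> k \<ge> M" by linarith
    obtain l' where l': "l' \<noteq> \<pi> k" using exists_other[OF n2] by blast
    define y :: "nat^'n" where "y = (\<chi> i. if i = \<pi> k then 1 else M)"
    have yN: "y \<in> Npts" using M1 by (simp add: y_def Npts_def)
    have "y \<in> ran \<alpha>" using big[OF yN, of l'] l' by (simp add: y_def)
    then obtain z where z: "z \<in> dom \<alpha>" "f z = y" using fran by blast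
    have "int 1 = int (z $ k) + int (f a $ \<pi> k) - int M"
      using key[OF z(1), of k] spos z(2) by (simp add: y_def)
    moreover have "z $ k \<ge> 1" using xN[OF z(1)] by (simp add: Npts_def)
    ultimately have "f a $ \<pi> k \<le> M" by linarith
    with ge show ?thesis by simp
  qed
  have fx: "f x $ \<pi> k = x $ k" if "x \<in> dom \<alpha>" for x k
    using key[OF that, of k] spos b0 by simp
  define q where "q = inv \<pi>"
  have bq: "bij q" unfolding q_def using bij by (simp add: bij_imp_bij_inv)
  have "\<alpha> x = restr (dom \<alpha>) q x" for x
  proof (cases "x \<in> dom \<alpha>")
    case True
    have "f x = P q x"
    proof (subst vec_eq_iff, rule allI)
      fix j
      have "f x $ j = f x $ \<pi> (q j)" using bij by (simp add: q_def bij_is_surj surj_f_inv_f)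
      also have "\<dots> = x $ q j" using fx[OF True] by simp
      finally show "f x $ j = P q x $ j" by simp
    qed
    then show ?thesis using True fS by (simp add: restr_def)
  next
    case False
    then show ?thesis by (simp add: restr_def domIff)
  qed
  then show ?thesis using bq by blast
qed

definition cc :: "(nat^'n \<rightharpoonup> nat^'n) \<Rightarrow> nat" where "cc g = card (Npts - dom g)"

lemma INinf_D: "g \<in> INinf \<Longrightarrow> dom g \<subseteq> Npts \<and> ran g \<subseteq> Npts \<and> finite (Npts - dom g)"
  unfolding INinf_def cofinite_pi_def partial_isometry_def by auto

lemma rep:
  assumes n2: "CARD('n) \<ge> 2"
  shows "(g :: nat^'n \<rightharpoonup> nat^'n) \<in> INinf \<longleftrightarrow> (\<exists>A q. A \<subseteq> Npts \<and> finite (Npts - A) \<and> bij q \<and> g = restr A q)"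
proof
  assume g: "g \<in> INinf"
  then obtain q where "bij q" "g = restr (dom g) q" using char[OF n2] by blast
  then show "\<exists>A q. A \<subseteq> Npts \<and> finite (Npts - A) \<and> bij q \<and> g = restr A q"
    using INinf_D[OF g] by blast
next
  assume "\<exists>A q. A \<subseteq> Npts \<and> finite (Npts - A) \<and> bij q \<and> g = restr A q"
  then show "g \<in> INinf" using restr_INinf by blast
qed

lemma restr_eq: "(\<And>x. x \<in> A \<Longrightarrow> P q x = P r x) \<Longrightarrow> restr A q = restr A r"
  unfolding restr_def by auto

lemma closed:
  assumes n2: "CARD('n) \<ge> 2" and a: "(a :: nat^'n \<rightharpoonup> nat^'n) \<in> INinf" and b: "b \<in> INinf"
  shows "a \<cdot> b \<in> INinf"
proof -
  obtain A q where A: "A \<subseteq> Npts" "finite (Npts - A)" "bij q" "a = restr A q" using a rep[OF n2] by blast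
  obtain B r where B: "B \<subseteq> Npts" "finite (Npts - B)" "bij r" "b = restr B r" using b rep[OF n2] by blast
  have "Npts - {x\<in>A. P q x \<in> B} \<subseteq> (Npts - A) \<union> P (inv q) ` (Npts - B)"
  proof
    fix x assume x: "x \<in> Npts - {x\<in>A. P q x \<in> B}"
    show "x \<in> (Npts - A) \<union> P (inv q) ` (Npts - B)"
    proof (cases "x \<in> A")
      case True
      then have "P q x \<in> Npts - B" using x P_Npts by auto
      moreover have "x = P (inv q) (P q x)" using P_inv1[OF A(3)] by simp
      ultimately show ?thesis by blast
    qed (use x in auto)
  qed
  then have "finite (Npts - {x\<in>A. P q x \<in> B})"
    using A(2) B(2) finite_subset by blast
  moreover have "bij (q \<circ> r)" using A(3) B(3) by (simp add: bij_comp)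
  ultimately show ?thesis unfolding A(4) B(4) restr_comp using A(1)
    by (intro restr_INinf) auto
qed

lemma assoc: "(a \<cdot> b) \<cdot> c = a \<cdot> (b \<cdot> c)"
  unfolding rcomp_def by (simp add: map_comp_def fun_eq_iff split: option.splits)

lemma Iden_in: "Iden \<in> INinf"
  unfolding Iden_restr by (rule restr_INinf) auto

lemma Iden_left: assumes "a \<in> INinf" shows "Iden \<cdot> a = a"
proof
  fix x
  show "(Iden \<cdot> a) x = a x"
  proof (cases "x \<in> Npts")
    case False
    then have "a x = None" using INinf_D[OF assms] by blast
    then show ?thesis using False by (simp add: rcomp_def Iden_def)
  qed (simp add: rcomp_def Iden_def)
qed

lemma Iden_right: assumes "a \<in> INinf" shows "a \<cdot> Iden = a"
proof
  fix x
  show "(a \<cdot> Iden) x = a x"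
  proof (cases "a x")
    case (Some y)
    then have "y \<in> Npts" using INinf_D[OF assms] by (auto simp: ran_def)
    then show ?thesis using Some by (simp add: rcomp_def Iden_def)
  qed (simp add: rcomp_def Iden_def)
qed

lemma restr_unit:
  assumes "bij q" shows "restr Npts q \<in> units_IN"
proof -
  have u: "restr Npts q \<in> INinf" "restr Npts (inv q) \<in> INinf"
    using assms by (auto intro!: restr_INinf simp: bij_imp_bij_inv)
  have "restr Npts q \<cdot> restr Npts (inv q) = Iden"
    unfolding restr_comp Iden_restr
  proof -
    have "{x \<in> Npts. P q x \<in> Npts} = Npts" using P_Npts by auto
    moreover have "P (q \<circ> inv q) x = P id x" for x
      by (simp add: P_comp[symmetric] P_inv1[OF assms] P_id)
    ultimately show "restr {x \<in> Npts. P q x \<in> Npts} (q \<circ> inv q) = restr Npts id"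
      by (simp only:) (rule restr_eq)
  qed
  moreover have "restr Npts (inv q) \<cdot> restr Npts q = Iden"
    unfolding restr_comp Iden_restr
  proof -
    have "{x \<in> Npts. P (inv q) x \<in> Npts} = Npts" using P_Npts by auto
    moreover have "P (inv q \<circ> q) x = P id x" for x
      by (simp add: P_comp[symmetric] P_inv2[OF assms] P_id)
    ultimately show "restr {x \<in> Npts. P (inv q) x \<in> Npts} (inv q \<circ> q) = restr Npts id"
      by (simp only:) (rule restr_eq)
  qed
  ultimately show ?thesis unfolding units_IN_def using u by blast
qed

lemma units_rep:
  assumes n2: "CARD('n) \<ge> 2"
  shows "(s :: nat^'n \<rightharpoonup> nat^'n) \<in> units_IN \<longleftrightarrow> (\<exists>q. bij q \<and> s = restr Npts q)"
proof
  assume s: "s \<in> units_IN"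
  then have sI: "s \<in> INinf" and "\<exists>t. s \<cdot> t = Iden" unfolding units_IN_def by auto
  then obtain t where t: "s \<cdot> t = Iden" by blast
  obtain q where q: "bij q" "s = restr (dom s) q" using char[OF n2 sI] by blast
  have "Npts \<subseteq> dom s"
  proof
    fix x :: "nat^'n" assume "x \<in> Npts"
    then have "(s \<cdot> t) x = Some x" using t by (simp add: Iden_def)
    then show "x \<in> dom s" unfolding rcomp_def by (auto simp: map_comp_def split: option.splits)
  qed
  then have "dom s = Npts" using INinf_D[OF sI] by blast
  then have ds: "dom s = Npts" .
  have "s = restr (dom s) q" by (rule q(2))
  also have "\<dots> = restr Npts q" by (simp only: ds)
  finally have "s = restr Npts q" .
  then show "\<exists>q. bij q \<and> s = restr Npts q" using q(1) by blast
next
  assume "\<exists>q. bij q \<and> s = restr Npts q"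
  then show "s \<in> units_IN" using restr_unit by blast
qed

lemma units_sub: "units_IN \<subseteq> INinf" unfolding units_IN_def by auto

lemma units_inv: "s \<in> units_IN \<Longrightarrow> \<exists>t\<in>units_IN. s \<cdot> t = Iden \<and> t \<cdot> s = Iden"
  unfolding units_IN_def by auto

lemma Iden_unit: "Iden \<in> units_IN"
  unfolding Iden_restr by (rule restr_unit) simp

lemma units_finite:
  assumes n2: "CARD('n) \<ge> 2" shows "finite (units_IN :: (nat^'n \<rightharpoonup> nat^'n) set)"
proof -
  have "(units_IN :: (nat^'n \<rightharpoonup> nat^'n) set) \<subseteq> (\<lambda>q. restr Npts q) ` UNIV"
  proof
    fix s :: "nat^'n \<rightharpoonup> nat^'n" assume "s \<in> units_IN"
    then obtain q where "s = restr Npts q" using units_rep[OF n2] by blast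
    then show "s \<in> (\<lambda>q. restr Npts q) ` UNIV" by blast
  qed
  moreover have "finite ((\<lambda>q. restr Npts q) ` (UNIV :: ('n \<Rightarrow> 'n) set))" by simp
  ultimately show ?thesis by (rule finite_subset)
qed

lemma K1:
  assumes n2: "CARD('n) \<ge> 2" and u: "(u :: nat^'n \<rightharpoonup> nat^'n) \<in> INinf"
  shows "\<exists>s\<in>units_IN. u \<subseteq>\<^sub>m s"
proof -
  obtain A q where A: "A \<subseteq> Npts" "finite (Npts - A)" "bij q" "u = restr A q" using u rep[OF n2] by blast
  have "u \<subseteq>\<^sub>m restr Npts q" unfolding A(4) map_le_def dom_restr
  proof
    fix x assume "x \<in> A"
    then show "restr A q x = restr Npts q x" using A(1) by (auto simp: restr_def)
  qed
  then show ?thesis using restr_unit[OF A(3)] by blast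
qed

lemma K2:
  assumes n2: "CARD('n) \<ge> 2" and s: "(s :: nat^'n \<rightharpoonup> nat^'n) \<in> units_IN" and g: "g \<in> INinf"
  shows "cc (s \<cdot> g) = cc g \<and> cc (g \<cdot> s) = cc g"
proof -
  obtain p where p: "bij p" "s = restr Npts p" using s units_rep[OF n2] by blast
  obtain G r where G: "G \<subseteq> Npts" "finite (Npts - G)" "bij r" "g = restr G r" using g rep[OF n2] by blast
  have "Npts - {x\<in>Npts. P p x \<in> G} = P (inv p) ` (Npts - G)"
  proof
    show "Npts - {x\<in>Npts. P p x \<in> G} \<subseteq> P (inv p) ` (Npts - G)"
    proof
      fix x assume x: "x \<in> Npts - {x\<in>Npts. P p x \<in> G}"
      then have "P p x \<in> Npts - G" using P_Npts by auto
      moreover have "x = P (inv p) (P p x)" using P_inv1[OF p(1)] by simp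
      ultimately show "x \<in> P (inv p) ` (Npts - G)" by blast
    qed
    show "P (inv p) ` (Npts - G) \<subseteq> Npts - {x\<in>Npts. P p x \<in> G}"
    proof
      fix x assume "x \<in> P (inv p) ` (Npts - G)"
      then obtain y where y: "y \<in> Npts - G" "x = P (inv p) y" by blast
      then have "P p x = y" using P_inv2[OF p(1)] by simp
      moreover have "x \<in> Npts" using y P_Npts by blast
      ultimately show "x \<in> Npts - {x\<in>Npts. P p x \<in> G}" using y by blast
    qed
  qed
  moreover have "inj (P (inv p))" using P_inj p(1) bij_imp_bij_inv by blast
  ultimately have "card (Npts - {x\<in>Npts. P p x \<in> G}) = card (Npts - G)"
    using card_image[of "P (inv p)" "Npts - G"] inj_on_subset by (metis subset_UNIV)
  then have 1: "cc (s \<cdot> g) = cc g" unfolding cc_def p(2) G(4) restr_comp dom_restr .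
  have "{x\<in>G. P r x \<in> Npts} = G" using G(1) P_Npts by auto
  then have 2: "cc (g \<cdot> s) = cc g" unfolding cc_def p(2) G(4) restr_comp dom_restr by (simp only:)
  show ?thesis using 1 2 by blast
qed

lemma K3:
  assumes f: "f \<in> INinf" and g: "g \<in> INinf" and le: "f \<subseteq>\<^sub>m g"
  shows "cc g \<le> cc f" and "cc f \<le> cc g \<Longrightarrow> f = g"
proof -
  have dl: "dom f \<subseteq> dom g" using le by (rule map_le_implies_dom_le)
  have sub: "Npts - dom g \<subseteq> Npts - dom f" using dl by blast
  have ff: "finite (Npts - dom f)" using INinf_D[OF f] by blast
  show "cc g \<le> cc f" unfolding cc_def using card_mono[OF ff sub] .
  assume "cc f \<le> cc g"
  then have ce: "card (Npts - dom g) = card (Npts - dom f)"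
    using card_mono[OF ff sub] unfolding cc_def by (rule antisym[rotated])
  have e: "Npts - dom g = Npts - dom f" by (rule card_subset_eq[OF ff sub ce])
  have dg: "dom g \<subseteq> Npts" using INinf_D[OF g] by (rule conjunct1)
  have "dom g \<subseteq> dom f"
  proof
    fix x assume xg: "x \<in> dom g"
    show "x \<in> dom f"
    proof (rule ccontr)
      assume "x \<notin> dom f"
      then have "x \<in> Npts - dom f" using xg dg by blast
      then have "x \<in> Npts - dom g" using e by simp
      then show False using xg by blast
    qed
  qed
  then have "dom f = dom g" using dl by (rule equalityI[rotated])
  show "f = g"
  proof
    fix x show "f x = g x"
    proof (cases "x \<in> dom f")
      case True then show ?thesis using le unfolding map_le_def by blast
    next
      case False
      then have "x \<notin> dom g" using \<open>dom f = dom g\<close> by simp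
      then show ?thesis using False by (simp add: domIff)
    qed
  qed
qed

lemma mono_l: assumes "a \<subseteq>\<^sub>m a'" shows "a \<cdot> b \<subseteq>\<^sub>m a' \<cdot> b"
  unfolding map_le_def
proof
  fix x assume "x \<in> dom (a \<cdot> b)"
  then obtain y where y: "a x = Some y" unfolding rcomp_def by (auto simp: map_comp_Some_iff)
  then have "a' x = Some y" using assms unfolding map_le_def by (metis domI)
  then show "(a \<cdot> b) x = (a' \<cdot> b) x" using y by (simp add: rcomp_def)
qed
lemma mono_r: assumes "b \<subseteq>\<^sub>m b'" shows "a \<cdot> b \<subseteq>\<^sub>m a \<cdot> b'"
  unfolding map_le_def
proof
  fix x assume "x \<in> dom (a \<cdot> b)"
  then obtain y z where y: "a x = Some y" "b y = Some z" unfolding rcomp_def by (auto simp: map_comp_Some_iff)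
  then have "b' y = Some z" using assms unfolding map_le_def by (metis domI)
  then show "(a \<cdot> b) x = (a \<cdot> b') x" using y by (simp add: rcomp_def)
qed

lemma left_sub:
  assumes n2: "CARD('n) \<ge> 2" and s: "(s :: nat^'n \<rightharpoonup> nat^'n) \<in> INinf" and a: "a = s \<cdot> b"
  shows "left_ideal1 INinf (\<cdot>) a \<subseteq> left_ideal1 INinf (\<cdot>) b"
proof
  fix x assume "x \<in> left_ideal1 INinf (\<cdot>) a"
  then consider "x = a" | r where "r \<in> INinf" "x = r \<cdot> a" unfolding left_ideal1_def by blast
  then show "x \<in> left_ideal1 INinf (\<cdot>) b"
  proof cases
    case 1 then show ?thesis using s a unfolding left_ideal1_def by blast
  next
    case 2
    then have "x = (r \<cdot> s) \<cdot> b" using a by (simp add: assoc)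
    moreover have "r \<cdot> s \<in> INinf" using closed[OF n2 2(1) s] .
    ultimately show ?thesis unfolding left_ideal1_def by blast
  qed
qed

lemma right_sub:
  assumes n2: "CARD('n) \<ge> 2" and s: "(s :: nat^'n \<rightharpoonup> nat^'n) \<in> INinf" and a: "a = b \<cdot> s"
  shows "right_ideal1 INinf (\<cdot>) a \<subseteq> right_ideal1 INinf (\<cdot>) b"
proof
  fix x assume "x \<in> right_ideal1 INinf (\<cdot>) a"
  then consider "x = a" | r where "r \<in> INinf" "x = a \<cdot> r" unfolding right_ideal1_def by blast
  then show "x \<in> right_ideal1 INinf (\<cdot>) b"
  proof cases
    case 1 then show ?thesis using s a unfolding right_ideal1_def by blast
  next
    case 2
    then have "x = b \<cdot> (s \<cdot> r)" using a by (simp add: assoc)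
    moreover have "s \<cdot> r \<in> INinf" using closed[OF n2 s 2(1)] .
    ultimately show ?thesis unfolding right_ideal1_def by blast
  qed
qed

lemma two_ideal_eq:
  assumes n2: "CARD('n) \<ge> 2" and a: "(a :: nat^'n \<rightharpoonup> nat^'n) \<in> INinf"
  shows "two_ideal1 INinf (\<cdot>) a = {u \<cdot> a \<cdot> v | u v. u \<in> INinf \<and> v \<in> INinf}"
proof
  show "two_ideal1 INinf (\<cdot>) a \<subseteq> {u \<cdot> a \<cdot> v | u v. u \<in> INinf \<and> v \<in> INinf}"
  proof
    fix x assume "x \<in> two_ideal1 INinf (\<cdot>) a"
    then obtain w where w: "w \<in> insert a ((\<lambda>s. s \<cdot> a) ` INinf)" and x: "x \<in> insert w ((\<lambda>t. w \<cdot> t) ` INinf)"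
      unfolding two_ideal1_def by blast
    obtain u where u: "u \<in> INinf" "w = u \<cdot> a"
      using w Iden_in Iden_left[OF a] by force
    obtain v where v: "v \<in> INinf" "x = w \<cdot> v"
      using x Iden_in Iden_right closed[OF n2 u(1) a] u(2) by force
    show "x \<in> {u \<cdot> a \<cdot> v | u v. u \<in> INinf \<and> v \<in> INinf}" using u v by blast
  qed
  show "{u \<cdot> a \<cdot> v | u v. u \<in> INinf \<and> v \<in> INinf} \<subseteq> two_ideal1 INinf (\<cdot>) a"
  proof
    fix x assume "x \<in> {u \<cdot> a \<cdot> v | u v. u \<in> INinf \<and> v \<in> INinf}"
    then obtain u v where uv: "u \<in> INinf" "v \<in> INinf" "x = u \<cdot> a \<cdot> v" by blast
    have "u \<cdot> a \<in> insert a ((\<lambda>s. s \<cdot> a) ` INinf)" using uv by blast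
    moreover have "x \<in> insert (u \<cdot> a) ((\<lambda>t. (u \<cdot> a) \<cdot> t) ` INinf)" using uv by blast
    ultimately show "x \<in> two_ideal1 INinf (\<cdot>) a" unfolding two_ideal1_def by blast
  qed
qed

lemma core:
  assumes n2: "CARD('n) \<ge> 2" and a: "(\<alpha> :: nat^'n \<rightharpoonup> nat^'n) \<in> INinf" and b: "\<beta> \<in> INinf"
    and uv: "u \<in> INinf" "v \<in> INinf" "u' \<in> INinf" "v' \<in> INinf"
    and st: "\<sigma> \<in> units_IN" "\<tau> \<in> units_IN" "u \<subseteq>\<^sub>m \<sigma>" "v \<subseteq>\<^sub>m \<tau>"
    and e1: "\<alpha> = u \<cdot> \<beta> \<cdot> v" and e2: "\<beta> = u' \<cdot> \<alpha> \<cdot> v'"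
  shows "\<alpha> = \<sigma> \<cdot> \<beta> \<cdot> \<tau>"
proof -
  obtain \<sigma>' where s': "\<sigma>' \<in> units_IN" "u' \<subseteq>\<^sub>m \<sigma>'" using K1[OF n2 uv(3)] by blast
  obtain \<tau>' where t': "\<tau>' \<in> units_IN" "v' \<subseteq>\<^sub>m \<tau>'" using K1[OF n2 uv(4)] by blast
  have U: "\<sigma> \<in> INinf" "\<tau> \<in> INinf" "\<sigma>' \<in> INinf" "\<tau>' \<in> INinf" using st s' t' units_sub by auto
  have le1: "\<alpha> \<subseteq>\<^sub>m \<sigma> \<cdot> \<beta> \<cdot> \<tau>" unfolding e1
    by (rule map_le_trans[OF mono_r[OF st(4)] mono_l[OF mono_l[OF st(3)]]])
  have le2: "\<beta> \<subseteq>\<^sub>m \<sigma>' \<cdot> \<alpha> \<cdot> \<tau>'" unfolding e2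
    by (rule map_le_trans[OF mono_r[OF t'(2)] mono_l[OF mono_l[OF s'(2)]]])
  have m1: "\<sigma> \<cdot> \<beta> \<in> INinf" "\<sigma> \<cdot> \<beta> \<cdot> \<tau> \<in> INinf" using closed[OF n2] U b by blast+
  have m2: "\<sigma>' \<cdot> \<alpha> \<in> INinf" "\<sigma>' \<cdot> \<alpha> \<cdot> \<tau>' \<in> INinf" using closed[OF n2] U a by blast+
  have c1: "cc (\<sigma> \<cdot> \<beta> \<cdot> \<tau>) = cc \<beta>"
    using K2[OF n2 st(1) b] K2[OF n2 st(2) m1(1)] by simp
  have c2: "cc (\<sigma>' \<cdot> \<alpha> \<cdot> \<tau>') = cc \<alpha>"
    using K2[OF n2 s'(1) a] K2[OF n2 t'(1) m2(1)] by simp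
  have "cc \<alpha> \<le> cc \<beta>" using K3(1)[OF b m2(2) le2] c2 by simp
  then have "cc \<alpha> \<le> cc (\<sigma> \<cdot> \<beta> \<cdot> \<tau>)" using c1 by simp
  then show ?thesis using K3(2)[OF a m1(2) le1] by blast
qed

lemma Lchar:
  assumes n2: "CARD('n) \<ge> 2" and a: "(\<alpha> :: nat^'n \<rightharpoonup> nat^'n) \<in> INinf" and b: "\<beta> \<in> INinf"
  shows "greenL INinf (\<cdot>) \<alpha> \<beta> \<longleftrightarrow> (\<exists>\<sigma>\<in>units_IN. \<alpha> = \<sigma> \<cdot> \<beta>)"
proof
  assume L: "greenL INinf (\<cdot>) \<alpha> \<beta>"
  have "\<alpha> \<in> left_ideal1 INinf (\<cdot>) \<beta>" using L unfolding greenL_def left_ideal1_def by blast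
  then obtain u where u: "u \<in> INinf" "\<alpha> = u \<cdot> \<beta>"
    unfolding left_ideal1_def using Iden_in Iden_left[OF b] by force
  have "\<beta> \<in> left_ideal1 INinf (\<cdot>) \<alpha>" using L unfolding greenL_def left_ideal1_def by blast
  then obtain u' where u': "u' \<in> INinf" "\<beta> = u' \<cdot> \<alpha>"
    unfolding left_ideal1_def using Iden_in Iden_left[OF a] by force
  obtain \<sigma> where s: "\<sigma> \<in> units_IN" "u \<subseteq>\<^sub>m \<sigma>" using K1[OF n2 u(1)] by blast
  have "\<alpha> = u \<cdot> \<beta> \<cdot> Iden" using u Iden_right[OF a] by simp
  moreover have "\<beta> = u' \<cdot> \<alpha> \<cdot> Iden" using u' Iden_right[OF b] by simp
  ultimately have "\<alpha> = \<sigma> \<cdot> \<beta> \<cdot> Iden"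
    using core[OF n2 a b u(1) Iden_in u'(1) Iden_in s(1) Iden_unit s(2) map_le_refl] by blast
  moreover have "\<sigma> \<cdot> \<beta> \<in> INinf" using closed[OF n2 _ b] s(1) units_sub by blast
  ultimately show "\<exists>\<sigma>\<in>units_IN. \<alpha> = \<sigma> \<cdot> \<beta>" using s(1) Iden_right by metis
next
  assume "\<exists>\<sigma>\<in>units_IN. \<alpha> = \<sigma> \<cdot> \<beta>"
  then obtain \<sigma> where s: "\<sigma> \<in> units_IN" "\<alpha> = \<sigma> \<cdot> \<beta>" by blast
  obtain \<tau> where t: "\<tau> \<in> units_IN" "\<tau> \<cdot> \<sigma> = Iden" using units_inv[OF s(1)] by blast
  have "\<tau> \<cdot> \<alpha> = (\<tau> \<cdot> \<sigma>) \<cdot> \<beta>" using s(2) by (simp add: assoc)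
  then have "\<beta> = \<tau> \<cdot> \<alpha>" using t(2) Iden_left[OF b] by simp
  then show "greenL INinf (\<cdot>) \<alpha> \<beta>" unfolding greenL_def
    using left_sub[OF n2 _ s(2)] left_sub[OF n2, of \<tau> \<beta> \<alpha>] s(1) t(1) units_sub by blast
qed

lemma Rchar:
  assumes n2: "CARD('n) \<ge> 2" and a: "(\<alpha> :: nat^'n \<rightharpoonup> nat^'n) \<in> INinf" and b: "\<beta> \<in> INinf"
  shows "greenR INinf (\<cdot>) \<alpha> \<beta> \<longleftrightarrow> (\<exists>\<sigma>\<in>units_IN. \<alpha> = \<beta> \<cdot> \<sigma>)"
proof
  assume R: "greenR INinf (\<cdot>) \<alpha> \<beta>"
  have "\<alpha> \<in> right_ideal1 INinf (\<cdot>) \<beta>" using R unfolding greenR_def right_ideal1_def by blast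
  then obtain v where v: "v \<in> INinf" "\<alpha> = \<beta> \<cdot> v"
    unfolding right_ideal1_def using Iden_in Iden_right[OF b] by force
  have "\<beta> \<in> right_ideal1 INinf (\<cdot>) \<alpha>" using R unfolding greenR_def right_ideal1_def by blast
  then obtain v' where v': "v' \<in> INinf" "\<beta> = \<alpha> \<cdot> v'"
    unfolding right_ideal1_def using Iden_in Iden_right[OF a] by force
  obtain \<tau> where t: "\<tau> \<in> units_IN" "v \<subseteq>\<^sub>m \<tau>" using K1[OF n2 v(1)] by blast
  have "\<alpha> = Iden \<cdot> \<beta> \<cdot> v" using v Iden_left[OF b] by simp
  moreover have "\<beta> = Iden \<cdot> \<alpha> \<cdot> v'" using v' Iden_left[OF a] by simp
  ultimately have "\<alpha> = Iden \<cdot> \<beta> \<cdot> \<tau>"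
    using core[OF n2 a b Iden_in v(1) Iden_in v'(1) Iden_unit t(1) map_le_refl t(2)] by blast
  then show "\<exists>\<sigma>\<in>units_IN. \<alpha> = \<beta> \<cdot> \<sigma>" using t(1) Iden_left[OF b] by metis
next
  assume "\<exists>\<sigma>\<in>units_IN. \<alpha> = \<beta> \<cdot> \<sigma>"
  then obtain \<sigma> where s: "\<sigma> \<in> units_IN" "\<alpha> = \<beta> \<cdot> \<sigma>" by blast
  obtain \<tau> where t: "\<tau> \<in> units_IN" "\<sigma> \<cdot> \<tau> = Iden" using units_inv[OF s(1)] by blast
  have "\<alpha> \<cdot> \<tau> = \<beta> \<cdot> (\<sigma> \<cdot> \<tau>)" using s(2) by (simp add: assoc)
  then have "\<beta> = \<alpha> \<cdot> \<tau>" using t(2) Iden_right[OF b] by simp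
  then show "greenR INinf (\<cdot>) \<alpha> \<beta>" unfolding greenR_def
    using right_sub[OF n2 _ s(2)] right_sub[OF n2, of \<tau> \<beta> \<alpha>] s(1) t(1) units_sub by blast
qed

lemma Dchar:
  assumes n2: "CARD('n) \<ge> 2" and a: "(\<alpha> :: nat^'n \<rightharpoonup> nat^'n) \<in> INinf" and b: "\<beta> \<in> INinf"
  shows "greenD INinf (\<cdot>) \<alpha> \<beta> \<longleftrightarrow> (\<exists>\<sigma>1\<in>units_IN. \<exists>\<sigma>2\<in>units_IN. \<alpha> = \<sigma>1 \<cdot> \<beta> \<cdot> \<sigma>2)"
proof
  assume "greenD INinf (\<cdot>) \<alpha> \<beta>"
  then obtain c where c: "c \<in> INinf" "greenL INinf (\<cdot>) \<alpha> c" "greenR INinf (\<cdot>) c \<beta>"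
    unfolding greenD_def by blast
  obtain \<sigma>1 where s1: "\<sigma>1 \<in> units_IN" "\<alpha> = \<sigma>1 \<cdot> c" using Lchar[OF n2 a c(1)] c(2) by blast
  obtain \<sigma>2 where s2: "\<sigma>2 \<in> units_IN" "c = \<beta> \<cdot> \<sigma>2" using Rchar[OF n2 c(1) b] c(3) by blast
  have "\<alpha> = \<sigma>1 \<cdot> \<beta> \<cdot> \<sigma>2" using s1(2) s2(2) by (simp add: assoc)
  then show "\<exists>\<sigma>1\<in>units_IN. \<exists>\<sigma>2\<in>units_IN. \<alpha> = \<sigma>1 \<cdot> \<beta> \<cdot> \<sigma>2" using s1(1) s2(1) by blast
next
  assume "\<exists>\<sigma>1\<in>units_IN. \<exists>\<sigma>2\<in>units_IN. \<alpha> = \<sigma>1 \<cdot> \<beta> \<cdot> \<sigma>2"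
  then obtain \<sigma>1 \<sigma>2 where s: "\<sigma>1 \<in> units_IN" "\<sigma>2 \<in> units_IN" "\<alpha> = \<sigma>1 \<cdot> \<beta> \<cdot> \<sigma>2" by blast
  define c where "c = \<beta> \<cdot> \<sigma>2"
  have cI: "c \<in> INinf" unfolding c_def using closed[OF n2 b] s(2) units_sub by blast
  have "\<alpha> = \<sigma>1 \<cdot> c" using s(3) by (simp add: c_def assoc)
  then have "greenL INinf (\<cdot>) \<alpha> c" using Lchar[OF n2 a cI] s(1) by blast
  moreover have "greenR INinf (\<cdot>) c \<beta>" using Rchar[OF n2 cI b] s(2) c_def by blast
  ultimately show "greenD INinf (\<cdot>) \<alpha> \<beta>" unfolding greenD_def using cI by blast
qed

lemma inv_form:
  assumes n2: "CARD('n) \<ge> 2" and b: "(\<beta> :: nat^'n \<rightharpoonup> nat^'n) \<in> INinf"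
    and s: "\<sigma>1 \<in> units_IN" "\<sigma>2 \<in> units_IN" and e: "\<alpha> = \<sigma>1 \<cdot> \<beta> \<cdot> \<sigma>2"
  shows "\<exists>\<tau>1\<in>units_IN. \<exists>\<tau>2\<in>units_IN. \<beta> = \<tau>1 \<cdot> \<alpha> \<cdot> \<tau>2"
proof -
  obtain \<tau>1 where t1: "\<tau>1 \<in> units_IN" "\<tau>1 \<cdot> \<sigma>1 = Iden" using units_inv[OF s(1)] by blast
  obtain \<tau>2 where t2: "\<tau>2 \<in> units_IN" "\<sigma>2 \<cdot> \<tau>2 = Iden" using units_inv[OF s(2)] by blast
  have "\<tau>1 \<cdot> \<alpha> \<cdot> \<tau>2 = (\<tau>1 \<cdot> \<sigma>1) \<cdot> \<beta> \<cdot> (\<sigma>2 \<cdot> \<tau>2)" using e by (simp add: assoc)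
  also have "\<dots> = \<beta>" using t1(2) t2(2) Iden_left[OF b] Iden_right[OF b] by simp
  finally show ?thesis using t1(1) t2(1) by metis
qed

lemma J_sub:
  assumes n2: "CARD('n) \<ge> 2" and a: "(\<alpha> :: nat^'n \<rightharpoonup> nat^'n) \<in> INinf" and b: "\<beta> \<in> INinf"
    and s: "s \<in> INinf" "t \<in> INinf" and e: "\<alpha> = s \<cdot> \<beta> \<cdot> t"
  shows "two_ideal1 INinf (\<cdot>) \<alpha> \<subseteq> two_ideal1 INinf (\<cdot>) \<beta>"
proof
  fix x assume "x \<in> two_ideal1 INinf (\<cdot>) \<alpha>"
  then obtain u v where uv: "u \<in> INinf" "v \<in> INinf" "x = u \<cdot> \<alpha> \<cdot> v"
    unfolding two_ideal_eq[OF n2 a] by blast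
  have "x = (u \<cdot> s) \<cdot> \<beta> \<cdot> (t \<cdot> v)" using uv(3) e by (simp add: assoc)
  moreover have "u \<cdot> s \<in> INinf" "t \<cdot> v \<in> INinf" using closed[OF n2] uv s by blast+
  ultimately show "x \<in> two_ideal1 INinf (\<cdot>) \<beta>" unfolding two_ideal_eq[OF n2 b] by blast
qed

lemma DJ:
  assumes n2: "CARD('n) \<ge> 2" and a: "(\<alpha> :: nat^'n \<rightharpoonup> nat^'n) \<in> INinf" and b: "\<beta> \<in> INinf"
  shows "greenD INinf (\<cdot>) \<alpha> \<beta> \<longleftrightarrow> greenJ INinf (\<cdot>) \<alpha> \<beta>"
proof
  assume "greenD INinf (\<cdot>) \<alpha> \<beta>"
  then obtain \<sigma>1 \<sigma>2 where s: "\<sigma>1 \<in> units_IN" "\<sigma>2 \<in> units_IN" "\<alpha> = \<sigma>1 \<cdot> \<beta> \<cdot> \<sigma>2"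
    using Dchar[OF n2 a b] by blast
  obtain \<tau>1 \<tau>2 where t: "\<tau>1 \<in> units_IN" "\<tau>2 \<in> units_IN" "\<beta> = \<tau>1 \<cdot> \<alpha> \<cdot> \<tau>2"
    using inv_form[OF n2 b s] by blast
  show "greenJ INinf (\<cdot>) \<alpha> \<beta>" unfolding greenJ_def
    using J_sub[OF n2 a b _ _ s(3)] J_sub[OF n2 b a _ _ t(3)] s t units_sub by blast
next
  assume J: "greenJ INinf (\<cdot>) \<alpha> \<beta>"
  have "\<alpha> \<in> two_ideal1 INinf (\<cdot>) \<alpha>" unfolding two_ideal_eq[OF n2 a]
    using Iden_in Iden_left[OF a] Iden_right[OF a] by (metis (mono_tags, lifting) mem_Collect_eq)
  then have "\<alpha> \<in> two_ideal1 INinf (\<cdot>) \<beta>" using J unfolding greenJ_def by simp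
  then obtain u v where uv: "u \<in> INinf" "v \<in> INinf" "\<alpha> = u \<cdot> \<beta> \<cdot> v"
    unfolding two_ideal_eq[OF n2 b] by blast
  have "\<beta> \<in> two_ideal1 INinf (\<cdot>) \<beta>" unfolding two_ideal_eq[OF n2 b]
    using Iden_in Iden_left[OF b] Iden_right[OF b] by (metis (mono_tags, lifting) mem_Collect_eq)
  then have "\<beta> \<in> two_ideal1 INinf (\<cdot>) \<alpha>" using J unfolding greenJ_def by simp
  then obtain u' v' where uv': "u' \<in> INinf" "v' \<in> INinf" "\<beta> = u' \<cdot> \<alpha> \<cdot> v'"
    unfolding two_ideal_eq[OF n2 a] by blast
  obtain \<sigma> where s: "\<sigma> \<in> units_IN" "u \<subseteq>\<^sub>m \<sigma>" using K1[OF n2 uv(1)] by blast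
  obtain \<tau> where t: "\<tau> \<in> units_IN" "v \<subseteq>\<^sub>m \<tau>" using K1[OF n2 uv(2)] by blast
  have "\<alpha> = \<sigma> \<cdot> \<beta> \<cdot> \<tau>"
    using core[OF n2 a b uv(1,2) uv'(1,2) s(1) t(1) s(2) t(2) uv(3) uv'(3)] .
  then show "greenD INinf (\<cdot>) \<alpha> \<beta>" using Dchar[OF n2 a b] s(1) t(1) by blast
qed

lemma idem_le:
  assumes n2: "CARD('n) \<ge> 2" and e: "(e :: nat^'n \<rightharpoonup> nat^'n) \<in> INinf" and ee: "e \<cdot> e = e"
  shows "e \<subseteq>\<^sub>m Iden"
  unfolding map_le_def
proof
  fix x assume x: "x \<in> dom e"
  obtain E p where A: "E \<subseteq> Npts" "finite (Npts - E)" "bij p" "e = restr E p" using e rep[OF n2] by blast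
  have xE: "x \<in> E" using x A(4) by simp
  then have ex: "e x = Some (P p x)" using A(4) by (simp add: restr_def)
  have "(e \<cdot> e) x = e (P p x)" using ex by (simp add: rcomp_def)
  then have "e (P p x) = Some (P p x)" using ee ex by simp
  then have "P p (P p x) = P p x" using A(4) by (simp add: restr_def split: if_splits)
  then have "P p x = x" using P_inj[OF A(3)] by (simp add: inj_eq)
  then show "e x = Iden x" using ex xE A(1) by (auto simp: Iden_def)
qed

lemma Jclass:
  assumes n2: "CARD('n) \<ge> 2" and x: "(x :: nat^'n \<rightharpoonup> nat^'n) \<in> INinf"
  shows "finite {y\<in>INinf. greenJ INinf (\<cdot>) x y}
          \<and> (\<forall>y\<in>{y\<in>INinf. greenJ INinf (\<cdot>) x y}. \<forall>z\<in>{z\<in>INinf. greenJ INinf (\<cdot>) x z}.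
               natord INinf (\<cdot>) y z \<longrightarrow> y = z)"
proof
  have "{y\<in>INinf. greenJ INinf (\<cdot>) x y} \<subseteq> (\<lambda>(s,t). s \<cdot> x \<cdot> t) ` (units_IN \<times> units_IN)"
  proof
    fix y assume y: "y \<in> {y\<in>INinf. greenJ INinf (\<cdot>) x y}"
    then have yI: "y \<in> INinf" and "greenD INinf (\<cdot>) x y" using DJ[OF n2 x] by auto
    then obtain \<sigma>1 \<sigma>2 where s: "\<sigma>1 \<in> units_IN" "\<sigma>2 \<in> units_IN" "x = \<sigma>1 \<cdot> y \<cdot> \<sigma>2"
      using Dchar[OF n2 x] by blast
    obtain \<tau>1 \<tau>2 where t: "\<tau>1 \<in> units_IN" "\<tau>2 \<in> units_IN" "y = \<tau>1 \<cdot> x \<cdot> \<tau>2"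
      using inv_form[OF n2 yI s] by blast
    then show "y \<in> (\<lambda>(s,t). s \<cdot> x \<cdot> t) ` (units_IN \<times> units_IN)" by force
  qed
  moreover have "finite ((\<lambda>(s,t). s \<cdot> x \<cdot> t) ` (units_IN \<times> units_IN))"
    using units_finite[OF n2] by simp
  ultimately show "finite {y\<in>INinf. greenJ INinf (\<cdot>) x y}" by (rule finite_subset)
next
  show "\<forall>y\<in>{y\<in>INinf. greenJ INinf (\<cdot>) x y}. \<forall>z\<in>{z\<in>INinf. greenJ INinf (\<cdot>) x z}.
               natord INinf (\<cdot>) y z \<longrightarrow> y = z"
  proof (intro ballI impI)
    fix y z assume y: "y \<in> {y\<in>INinf. greenJ INinf (\<cdot>) x y}" and z: "z \<in> {z\<in>INinf. greenJ INinf (\<cdot>) x z}"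
      and nat: "natord INinf (\<cdot>) y z"
    have yI: "y \<in> INinf" and zI: "z \<in> INinf" using y z by auto
    have "greenJ INinf (\<cdot>) y z" using y z unfolding greenJ_def by auto
    then have "greenD INinf (\<cdot>) y z" using DJ[OF n2 yI zI] by blast
    then obtain \<sigma>1 \<sigma>2 where s: "\<sigma>1 \<in> units_IN" "\<sigma>2 \<in> units_IN" "y = \<sigma>1 \<cdot> z \<cdot> \<sigma>2"
      using Dchar[OF n2 yI zI] by blast
    have "\<sigma>1 \<cdot> z \<in> INinf" using closed[OF n2 _ zI] s(1) units_sub by blast
    then have ccyz: "cc y = cc z" using K2[OF n2 s(1) zI] K2[OF n2 s(2)] s(3) by simp
    obtain e where e: "e \<in> INinf" "e \<cdot> e = e" "y = z \<cdot> e" using nat unfolding natord_def by blast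
    have "y \<subseteq>\<^sub>m z \<cdot> Iden" unfolding e(3) by (rule mono_r[OF idem_le[OF n2 e(1,2)]])
    then have "y \<subseteq>\<^sub>m z" using Iden_right[OF zI] by simp
    then show "y = z" using K3(2)[OF yI zI] ccyz by simp
  qed
qed

theorem theorem3p8:
  fixes \<alpha> \<beta> :: "nat ^ 'n \<rightharpoonup> nat ^ 'n"
  assumes n2: "CARD('n) \<ge> 2"
    and a: "\<alpha> \<in> INinf" and b: "\<beta> \<in> INinf"
  shows "(greenL INinf (\<cdot>) \<alpha> \<beta> \<longleftrightarrow> (\<exists>\<sigma>\<in>units_IN. \<alpha> = \<sigma> \<cdot> \<beta>))
    \<and> (greenR INinf (\<cdot>) \<alpha> \<beta> \<longleftrightarrow> (\<exists>\<sigma>\<in>units_IN. \<alpha> = \<beta> \<cdot> \<sigma>))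
    \<and> (greenH INinf (\<cdot>) \<alpha> \<beta> \<longleftrightarrow> (\<exists>\<sigma>1\<in>units_IN. \<exists>\<sigma>2\<in>units_IN. \<alpha> = \<sigma>1 \<cdot> \<beta> \<and> \<alpha> = \<beta> \<cdot> \<sigma>2))
    \<and> (greenD INinf (\<cdot>) \<alpha> \<beta> \<longleftrightarrow> (\<exists>\<sigma>1\<in>units_IN. \<exists>\<sigma>2\<in>units_IN. \<alpha> = \<sigma>1 \<cdot> \<beta> \<cdot> \<sigma>2))
    \<and> (\<forall>x\<in>(INinf :: (nat ^ 'n \<rightharpoonup> nat ^ 'n) set). \<forall>y\<in>INinf.
          greenD INinf (\<cdot>) x y \<longleftrightarrow> greenJ INinf (\<cdot>) x y)
    \<and> (\<forall>x\<in>(INinf :: (nat ^ 'n \<rightharpoonup> nat ^ 'n) set).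
          finite {y\<in>INinf. greenJ INinf (\<cdot>) x y}
          \<and> (\<forall>y\<in>{y\<in>INinf. greenJ INinf (\<cdot>) x y}. \<forall>z\<in>{z\<in>INinf. greenJ INinf (\<cdot>) x z}.
               natord INinf (\<cdot>) y z \<longrightarrow> y = z))"
proof (intro conjI)
  show "greenL INinf (\<cdot>) \<alpha> \<beta> \<longleftrightarrow> (\<exists>\<sigma>\<in>units_IN. \<alpha> = \<sigma> \<cdot> \<beta>)" by (rule Lchar[OF n2 a b])
  show "greenR INinf (\<cdot>) \<alpha> \<beta> \<longleftrightarrow> (\<exists>\<sigma>\<in>units_IN. \<alpha> = \<beta> \<cdot> \<sigma>)" by (rule Rchar[OF n2 a b])
  show "greenH INinf (\<cdot>) \<alpha> \<beta> \<longleftrightarrow> (\<exists>\<sigma>1\<in>units_IN. \<exists>\<sigma>2\<in>units_IN. \<alpha> = \<sigma>1 \<cdot> \<beta> \<and> \<alpha> = \<beta> \<cdot> \<sigma>2)"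
    unfolding greenH_def Lchar[OF n2 a b] Rchar[OF n2 a b] by blast
  show "greenD INinf (\<cdot>) \<alpha> \<beta> \<longleftrightarrow> (\<exists>\<sigma>1\<in>units_IN. \<exists>\<sigma>2\<in>units_IN. \<alpha> = \<sigma>1 \<cdot> \<beta> \<cdot> \<sigma>2)"
    by (rule Dchar[OF n2 a b])
  show "\<forall>x\<in>(INinf :: (nat ^ 'n \<rightharpoonup> nat ^ 'n) set). \<forall>y\<in>INinf.
          greenD INinf (\<cdot>) x y \<longleftrightarrow> greenJ INinf (\<cdot>) x y"
    using DJ[OF n2] by blast
  show "\<forall>x\<in>(INinf :: (nat ^ 'n \<rightharpoonup> nat ^ 'n) set).
          finite {y\<in>INinf. greenJ INinf (\<cdot>) x y}
          \<and> (\<forall>y\<in>{y\<in>INinf. greenJ INinf (\<cdot>) x y}. \<forall>z\<in>{z\<in>INinf. greenJ INinf (\<cdot>) x z}.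
               natord INinf (\<cdot>) y z \<longrightarrow> y = z)"
    using Jclass[OF n2] by blast
qed

end
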